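(* Let $0<\alpha<1$, let $T>0$, let $N\ge 1$, and let $\beta_0,\beta_1,\dots,\beta_N\in\mathbb{R}$ and $\tau_1,\dots,\tau_N\in\mathbb{R}\setminus\{0\}$. Let $f:[0,T]\to\mathbb{R}$ be a real function such that $f'$ is absolutely continuous on $[0,T]$, $f'(0)<\infty$ and $f''\in L^1(0,T)$. Define, for $t\in[0,T]$, the Caputo derivative $$D_t^\alpha f=\frac{1}{\Gamma(1-\alpha)}\int_0^t \frac{f'(s)}{(t-s)^{\alpha}}\,ds=\frac{1}{\Gamma(2-\alpha)}\Big(t^{1-\alpha}f'(0)+\int_0^t (t-s)^{1-\alpha}f''(s)\,ds\Big),$$ the Prony approximation $$\hat D_t^\alpha f=\beta_0 f'(t)+\sum_{k=1}^N\int_0^t \beta_k \exp\!\Big[\frac{s-t}{\tau_k}\Big] f'(s)\,ds,$$ and the truncation error $$\varepsilon(z)=\frac{z^{1-\alpha}}{\Gamma(2-\alpha)}-\beta_0+\sum_{k=1}^N\beta_k\tau_k\big(\exp(-z/\tau_k)-1\big),\qquad z\in[0,T].$$ Then for $t\in[0,T]$ $$D_t^\alpha f-\hat D_t^\alpha f=\varepsilon(t)f'(0)+\int_0^t\varepsilon(z)f''(t-z)\,dz,$$ and for any $t\in[0,T]$ $$\big|D_t^\alpha f-\hat D_t^\alpha f\big|\le \|\varepsilon\|_{L^\infty(0,T)}\Big[|f'(0)|+\|f''\|_{L^1(0,T)}\Big].$$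
   Context: $\Gamma$ denotes the Gamma function. $\|\cdot\|_{L^\infty(0,T)}$ and $\|\cdot\|_{L^1(0,T)}$ are the usual $L^\infty$ and $L^1$ norms on $(0,T)$. The two expressions given for $D_t^\alpha f$ agree for such $f$ (integration by parts); the paper works with the second form. *)

theory Defs
  imports "HOL-Analysis.Analysis"
begin

definition abs_cont_on :: "real \<Rightarrow> real \<Rightarrow> (real \<Rightarrow> real) \<Rightarrow> bool" where
  "abs_cont_on a b g \<longleftrightarrow>
     (\<forall>e>0. \<exists>d>0. \<forall>(n::nat) (u::nat \<Rightarrow> real) (v::nat \<Rightarrow> real).
        (\<forall>i<n. a \<le> u i \<and> u i \<le> v i \<and> v i \<le> b) \<and>
        (\<forall>i<n. \<forall>j<n. i \<noteq> j \<longrightarrow> {u i<..<v i} \<inter> {u j<..<v j} = {}) \<and>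
        (\<Sum>i<n. v i - u i) < d
        \<longrightarrow> (\<Sum>i<n. \<bar>g (v i) - g (u i)\<bar>) < e)"

text \<open>Caputo derivative, in the second (integrated by parts) form used in the paper;
 f1 = f', f2 = f''.\<close>
definition caputo :: "real \<Rightarrow> (real \<Rightarrow> real) \<Rightarrow> (real \<Rightarrow> real) \<Rightarrow> real \<Rightarrow> real" where
  "caputo \<alpha> f1 f2 t =
     (t powr (1 - \<alpha>) * f1 0 + (LINT s:{0..t}|lborel. (t - s) powr (1 - \<alpha>) * f2 s)) / Gamma (2 - \<alpha>)"

definition prony :: "nat \<Rightarrow> (nat \<Rightarrow> real) \<Rightarrow> (nat \<Rightarrow> real) \<Rightarrow> (real \<Rightarrow> real) \<Rightarrow> real \<Rightarrow> real" where
  "prony N \<beta> \<tau> f1 t =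
     \<beta> 0 * f1 t + (\<Sum>k=1..N. LINT s:{0..t}|lborel. \<beta> k * exp ((s - t) / \<tau> k) * f1 s)"

definition prony_err :: "real \<Rightarrow> nat \<Rightarrow> (nat \<Rightarrow> real) \<Rightarrow> (nat \<Rightarrow> real) \<Rightarrow> real \<Rightarrow> real" where
  "prony_err \<alpha> N \<beta> \<tau> z =
     z powr (1 - \<alpha>) / Gamma (2 - \<alpha>) - \<beta> 0 + (\<Sum>k=1..N. \<beta> k * \<tau> k * (exp (- z / \<tau> k) - 1))"

end

theory Submission
  imports Defs
begin

lemma abs_cont_on_sub:
  assumes "abs_cont_on a b h" "a \<le> c" "d \<le> b"
  shows "abs_cont_on c d h"
  using assms unfolding abs_cont_on_def
  by (smt (verit, ccfv_threshold))

definition ACP :: "real \<Rightarrow> real \<Rightarrow> (real \<Rightarrow> real) \<Rightarrow> real \<Rightarrow> real \<Rightarrow> bool" where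
 "ACP a b g e d \<longleftrightarrow> (\<forall>(n::nat) (u::nat \<Rightarrow> real) (v::nat \<Rightarrow> real).
        (\<forall>i<n. a \<le> u i \<and> u i \<le> v i \<and> v i \<le> b) \<and>
        (\<forall>i<n. \<forall>j<n. i \<noteq> j \<longrightarrow> {u i<..<v i} \<inter> {u j<..<v j} = {}) \<and>
        (\<Sum>i<n. v i - u i) < d
        \<longrightarrow> (\<Sum>i<n. \<bar>g (v i) - g (u i)\<bar>) < e)"
lemma abs_cont_on_alt: "abs_cont_on a b g \<longleftrightarrow> (\<forall>e>0. \<exists>d>0. ACP a b g e d)"
  unfolding abs_cont_on_def ACP_def by (rule refl)

definition acprop :: "real \<Rightarrow> real \<Rightarrow> (real \<Rightarrow> real) \<Rightarrow> real \<Rightarrow> real \<Rightarrow> 'a set \<Rightarrow> ('a \<Rightarrow> real set) \<Rightarrow> bool" where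
  "acprop a b h e \<delta> I K \<longleftrightarrow> finite I \<longrightarrow> (\<forall>i\<in>I. \<exists>u v. K i = {u..v} \<and> a \<le> u \<and> u \<le> v \<and> v \<le> b) \<longrightarrow>
       (\<forall>i\<in>I. \<forall>j\<in>I. i \<noteq> j \<longrightarrow> interior (K i) \<inter> interior (K j) = {}) \<longrightarrow>
       (\<Sum>i\<in>I. Sup (K i) - Inf (K i)) < \<delta> \<longrightarrow> (\<Sum>i\<in>I. \<bar>h (Sup (K i)) - h (Inf (K i))\<bar>) < e"

lemma ac_sum_bound:
  assumes ac: "abs_cont_on a b h" and e: "e > 0"
  shows "\<exists>\<delta>>0. \<forall>(I::'a set) K. acprop a b h e \<delta> I K"
proof -
  have X: "\<exists>d. d > 0 \<and> ACP a b h e d"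
    using ac e unfolding abs_cont_on_alt by blast
  define \<delta> where "\<delta> = (SOME d. d > 0 \<and> ACP a b h e d)"
  have dd0: "\<delta> > 0 \<and> ACP a b h e \<delta>" unfolding \<delta>_def by (rule someI_ex[OF X])
  have d: "\<delta> > 0" using dd0 by (rule conjunct1)
  have dd: "\<forall>(n::nat) (u::nat \<Rightarrow> real) v. (\<forall>i<n. a \<le> u i \<and> u i \<le> v i \<and> v i \<le> b) \<and>
        (\<forall>i<n. \<forall>j<n. i \<noteq> j \<longrightarrow> {u i<..<v i} \<inter> {u j<..<v j} = {}) \<and>
        (\<Sum>i<n. v i - u i) < \<delta>
        \<longrightarrow> (\<Sum>i<n. \<bar>h (v i) - h (u i)\<bar>) < e" using dd0 unfolding ACP_def by (rule conjunct2)
  have "\<forall>(I::'a set) K. acprop a b h e \<delta> I K"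
    unfolding acprop_def
  proof (intro allI impI)
    fix I :: "'a set" and K :: "'a \<Rightarrow> real set"
    assume fin: "finite I" and iv: "\<forall>i\<in>I. \<exists>u v. K i = {u..v} \<and> a \<le> u \<and> u \<le> v \<and> v \<le> b"
      and pw: "\<forall>i\<in>I. \<forall>j\<in>I. i \<noteq> j \<longrightarrow> interior (K i) \<inter> interior (K j) = {}"
      and sm: "(\<Sum>i\<in>I. Sup (K i) - Inf (K i)) < \<delta>"
    obtain f where f: "bij_betw f {..<card I} I"
      using ex_bij_betw_nat_finite[OF fin] lessThan_atLeast0 by metis
    define u where "u i = Inf (K (f i))" for i
    define v where "v i = Sup (K (f i))" for i
    have fi: "f i \<in> I" if "i < card I" for i using f that by (auto simp: bij_betw_def)
    have uv: "K (f i) = {u i..v i} \<and> a \<le> u i \<and> u i \<le> v i \<and> v i \<le> b" if ic: "i < card I" for i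
    proof -
      obtain x y where "K (f i) = {x..y}" "a \<le> x" "x \<le> y" "y \<le> b" using iv fi[OF ic] by blast
      then show ?thesis by (simp add: u_def v_def)
    qed
    have s1: "(\<Sum>i\<in>I. Sup (K i) - Inf (K i)) = (\<Sum>i<card I. v i - u i)"
      using sum.reindex_bij_betw[OF f, of "\<lambda>i. Sup (K i) - Inf (K i)"] by (simp add: u_def v_def)
    have s2: "(\<Sum>i\<in>I. \<bar>h (Sup (K i)) - h (Inf (K i))\<bar>) = (\<Sum>i<card I. \<bar>h (v i) - h (u i)\<bar>)"
      using sum.reindex_bij_betw[OF f, of "\<lambda>i. \<bar>h (Sup (K i)) - h (Inf (K i))\<bar>"] by (simp add: u_def v_def)
    have dj: "{u i<..<v i} \<inter> {u j<..<v j} = {}" if "i < card I" "j < card I" "i \<noteq> j" for i j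
    proof -
      have "f i \<noteq> f j" using f that by (auto simp: bij_betw_def inj_on_def)
      then have "interior (K (f i)) \<inter> interior (K (f j)) = {}" using pw fi that by blast
      then show ?thesis using uv that by simp
    qed
    show "(\<Sum>i\<in>I. \<bar>h (Sup (K i)) - h (Inf (K i))\<bar>) < e"
      unfolding s2 using dd[rule_format, of "card I" u v] uv dj sm s1 by auto
  qed
  then show ?thesis using d by blast
qed

lemma ftc_ac:
  fixes h g :: "real \<Rightarrow> real"
  assumes ab: "a < b" and ac: "abs_cont_on a b h"
    and der: "AE x in lborel. x \<in> {a<..<b} \<longrightarrow> (h has_real_derivative g x) (at x)"
  shows "(g has_integral (h b - h a)) {a..b}"
proof -
  obtain N0 where N0: "{x \<in> space lborel. \<not> (x \<in> {a<..<b} \<longrightarrow> (h has_real_derivative g x) (at x))} \<subseteq> N0"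
    "emeasure lborel N0 = 0" "N0 \<in> sets lborel" using der by (rule AE_E)
  define N where "N = N0 \<union> {a,b}"
  have "negligible N0" using N0 by (simp add: negligible_iff_null_sets null_sets_completionI null_setsI)
  then have negN: "negligible N" unfolding N_def by (simp add: negligible_Un)
  have derN: "(h has_real_derivative g x) (at x)" if "x \<notin> N" "x \<in> {a<..<b}" for x
    using N0(1) that unfolding N_def by auto
  define g' where "g' x = (if x \<in> N then 0 else g x)" for x
  have "(g' has_integral (h b - h a)) {a..b}"
    unfolding has_integral_real
  proof (intro allI impI)
    fix e :: real assume e: "e > 0"
    have X: "\<exists>d. d > 0 \<and> (\<forall>I (K::real \<times> real set \<Rightarrow> real set). acprop a b h (e/2) d I K)"
      using ac_sum_bound[OF ac half_gt_zero[OF e]] by blast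
    define \<delta> where "\<delta> = (SOME d. d > 0 \<and> (\<forall>I (K::real \<times> real set \<Rightarrow> real set). acprop a b h (e/2) d I K))"
    have dd0: "\<delta> > 0 \<and> (\<forall>I (K::real \<times> real set \<Rightarrow> real set). acprop a b h (e/2) \<delta> I K)"
      unfolding \<delta>_def by (rule someI_ex[OF X])
    then have \<delta>: "\<delta> > 0" by blast
    have acb: "\<And>I (K::real \<times> real set \<Rightarrow> real set). finite I \<Longrightarrow> (\<forall>i\<in>I. \<exists>u v. K i = {u..v} \<and> a \<le> u \<and> u \<le> v \<and> v \<le> b) \<Longrightarrow>
       (\<forall>i\<in>I. \<forall>j\<in>I. i \<noteq> j \<longrightarrow> interior (K i) \<inter> interior (K j) = {}) \<Longrightarrow>
       (\<Sum>i\<in>I. Sup (K i) - Inf (K i)) < \<delta> \<Longrightarrow> (\<Sum>i\<in>I. \<bar>h (Sup (K i)) - h (Inf (K i))\<bar>) < e/2"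
      using dd0 unfolding acprop_def by blast
    have Nl: "N \<in> sets lebesgue" using negN negligible_imp_sets by blast
    obtain G where G: "open G" "N \<subseteq> G" "(G - N) \<in> lmeasurable" "emeasure lebesgue (G - N) < ennreal \<delta>"
      using sets_lebesgue_outer_open[OF Nl \<delta>] by blast
    have Nm: "N \<in> lmeasurable" using negN negligible_imp_measurable by blast
    have GU: "G = (G - N) \<union> N" using G(2) by blast
    have Gm: "G \<in> lmeasurable" using G(3) Nm by (subst GU) (rule fmeasurable.Un)
    have "measure lebesgue (G - N) < \<delta>"
      using G(4) emeasure_eq_measure2[OF G(3)] \<delta> by (simp add: ennreal_less_iff)
    moreover have "measure lebesgue G \<le> measure lebesgue (G - N) + measure lebesgue N"
      by (subst GU) (rule measure_Un_le[OF fmeasurableD[OF G(3)] fmeasurableD[OF Nm]])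
    moreover have "measure lebesgue N = 0" using negN negligible_imp_measure0 by blast
    ultimately have mG: "measure lebesgue G < \<delta>" by linarith
    define c where "c = e / (2*(b-a))"
    have c: "c > 0" using e ab by (simp add: c_def)
    have ex: "\<exists>r>0. (x \<in> N \<longrightarrow> ball x r \<subseteq> G) \<and> (x \<notin> N \<and> x \<in> {a<..<b} \<longrightarrow>
              (\<forall>y. \<bar>y - x\<bar> < r \<longrightarrow> \<bar>h y - h x - (y - x) * g x\<bar> \<le> c * \<bar>y - x\<bar>))" for x
    proof (cases "x \<in> N")
      case True
      then obtain r where "r > 0" "ball x r \<subseteq> G" using G(1,2) open_contains_ball by blast
      then show ?thesis using True by blast
    next
      case False
      show ?thesis
      proof (cases "x \<in> {a<..<b}")
        case True
        have "(h has_derivative (\<lambda>y. g x * y)) (at x)"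
          using derN[OF False True] by (simp add: has_field_derivative_def)
        then obtain r where "r > 0" "\<forall>y. norm (y - x) < r \<longrightarrow> norm (h y - h x - g x * (y - x)) \<le> c * norm (y - x)"
          unfolding has_derivative_at_alt using c by blast
        then show ?thesis using False by (auto simp: mult.commute)
      next
        case False2: False
        show ?thesis using False False2 by (intro exI[of _ 1]) auto
      qed
    qed
    define Q where "Q x r \<longleftrightarrow> (x \<in> N \<longrightarrow> ball x r \<subseteq> G) \<and> (x \<notin> N \<and> x \<in> {a<..<b} \<longrightarrow>
              (\<forall>y. \<bar>y - x\<bar> < r \<longrightarrow> \<bar>h y - h x - (y - x) * g x\<bar> \<le> c * \<bar>y - x\<bar>))" for x r
    have "\<forall>x. \<exists>r. r > 0 \<and> Q x r" using ex unfolding Q_def by blast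
    then obtain r where rr: "\<forall>x. r x > 0 \<and> Q x (r x)" by (rule choice[THEN exE])
    have r: "\<And>x. r x > 0" "\<And>x. x \<in> N \<Longrightarrow> ball x (r x) \<subseteq> G"
      "\<And>x y. x \<notin> N \<Longrightarrow> x \<in> {a<..<b} \<Longrightarrow> \<bar>y - x\<bar> < r x \<Longrightarrow> \<bar>h y - h x - (y - x) * g x\<bar> \<le> c * \<bar>y - x\<bar>"
      using rr unfolding Q_def by auto
    show "\<exists>\<gamma>. gauge \<gamma> \<and> (\<forall>\<D>. \<D> tagged_division_of {a..b} \<and> \<gamma> fine \<D> \<longrightarrow>
        norm ((\<Sum>(x,k)\<in>\<D>. measure lborel k *\<^sub>R g' x) - (h b - h a)) < e)"
    proof (intro exI conjI allI impI)
      show "gauge (\<lambda>x. ball x (r x))" using r(1) by (simp add: gauge_ball_dependent)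
      fix p assume pp: "p tagged_division_of {a..b} \<and> (\<lambda>x. ball x (r x)) fine p"
      then have p: "p tagged_division_of {a..b}" and fine: "(\<lambda>x. ball x (r x)) fine p" by auto
      note pd = tagged_division_ofD[OF p]
      have ivl: "\<exists>u v. K = {u..v} \<and> a \<le> u \<and> u \<le> v \<and> v \<le> b \<and> u \<le> x \<and> x \<le> v" if xK: "(x,K) \<in> p" for x K
      proof -
        obtain u v where K: "K = cbox u v" using pd(4)[OF xK] by blast
        have "x \<in> K" "K \<subseteq> {a..b}" using pd(2,3)[OF xK] by auto
        then show ?thesis using K by auto
      qed
      have sum_eq: "(\<Sum>(x,k)\<in>p. measure lborel k *\<^sub>R g' x) - (h b - h a)
          = (\<Sum>(x,K)\<in>p. measure lborel K * g' x - (h (Sup K) - h (Inf K)))"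
        using additive_tagged_division_1[OF less_imp_le[OF ab] p, of h]
        by (simp add: sum_subtractf split_def)
      define F where "F = (\<lambda>(x,K). measure lborel K * g' x - (h (Sup K) - h (Inf K)))"
      define p1 where "p1 = p \<inter> {xk. fst xk \<in> N}"
      define p2 where "p2 = p - {xk. fst xk \<in> N}"
      have split: "sum F p = sum F p1 + sum F p2"
        unfolding p1_def p2_def by (rule sum.Int_Diff[OF pd(1)])
      have fin1: "finite p1" using pd(1) by (simp add: p1_def)
      have fin2: "finite p2" using pd(1) by (simp add: p2_def)
      have ivl': "\<exists>u v. snd i = {u..v} \<and> a \<le> u \<and> u \<le> v \<and> v \<le> b \<and> u \<le> fst i \<and> fst i \<le> v" if "i \<in> p" for i
        using ivl[of "fst i" "snd i"] that by simp
      have pd5: "interior (snd i) \<inter> interior (snd j) = {}" if "i \<in> p" "j \<in> p" "i \<noteq> j" for i j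
        using pd(5)[of "fst i" "snd i" "fst j" "snd j"] that by (simp add: prod_eq_iff)
      have p1p: "i \<in> p" "fst i \<in> N" if "i \<in> p1" for i using that by (auto simp: p1_def)
      have P1: "\<bar>sum F p1\<bar> < e/2"
      proof -
        have Fi: "\<bar>F i\<bar> = \<bar>h (Sup (snd i)) - h (Inf (snd i))\<bar>" if "i \<in> p1" for i
          using p1p(2)[OF that] by (simp add: F_def g'_def split_beta)
        have "\<bar>sum F p1\<bar> \<le> (\<Sum>i\<in>p1. \<bar>h (Sup (snd i)) - h (Inf (snd i))\<bar>)"
          by (rule order_trans[OF sum_abs]) (simp add: Fi)
        also have "\<dots> < e/2"
        proof (rule acb[OF fin1])
          show "\<forall>i\<in>p1. \<exists>u v. snd i = {u..v} \<and> a \<le> u \<and> u \<le> v \<and> v \<le> b"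
            using ivl' p1p(1) by blast
          show "\<forall>i\<in>p1. \<forall>j\<in>p1. i \<noteq> j \<longrightarrow> interior (snd i) \<inter> interior (snd j) = {}"
            using pd5 p1p(1) by blast
          have "(\<Sum>i\<in>p1. Sup (snd i) - Inf (snd i)) = (\<Sum>i\<in>p1. measure lebesgue (snd i))"
          proof (rule sum.cong[OF refl])
            fix i assume "i \<in> p1"
            then obtain u v where "snd i = {u..v}" "u \<le> v" using ivl' p1p(1) by blast
            then show "Sup (snd i) - Inf (snd i) = measure lebesgue (snd i)" by simp
          qed
          also have "\<dots> = measure lebesgue (\<Union>(snd ` p1))"
          proof (rule measure_negligible_finite_Union_image[symmetric, OF fin1])
            show "snd i \<in> lmeasurable" if i1: "i \<in> p1" for i
            proof -
              obtain u v where "snd i = {u..v}" using ivl' p1p(1)[OF i1] by blast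
              then show ?thesis by simp
            qed
            show "pairwise (\<lambda>i j. negligible (snd i \<inter> snd j)) p1"
              unfolding pairwise_def
            proof (intro ballI impI)
              fix i j assume ij: "i \<in> p1" "j \<in> p1" "i \<noteq> j"
              obtain u v where uv: "snd i = {u..v}" "u \<le> v" using ivl' p1p(1)[OF ij(1)] by blast
              obtain u' v' where uv': "snd j = {u'..v'}" "u' \<le> v'" using ivl' p1p(1)[OF ij(2)] by blast
              have "interior (snd i) \<inter> interior (snd j) = {}"
                using pd5 p1p(1) ij by blast
              then have dj: "{u<..<v} \<inter> {u'<..<v'} = {}" using uv uv' by simp
              have "snd i \<inter> snd j \<subseteq> {u,v,u',v'}"
              proof
                fix z assume z: "z \<in> snd i \<inter> snd j"
                show "z \<in> {u,v,u',v'}"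
                proof (rule ccontr)
                  assume "z \<notin> {u,v,u',v'}"
                  then have "z \<in> {u<..<v} \<inter> {u'<..<v'}" using z uv uv' by auto
                  then show False using dj by blast
                qed
              qed
              then show "negligible (snd i \<inter> snd j)"
                by (rule negligible_subset[rotated]) simp
            qed
          qed
          also have "\<dots> \<le> measure lebesgue G"
          proof (rule measure_mono_fmeasurable[OF _ _ Gm])
            show "\<Union>(snd ` p1) \<subseteq> G"
            proof clarify
              fix x K y assume "(x,K) \<in> p1" "y \<in> snd (x,K)"
              then have "x \<in> N" "(x,K) \<in> p" "y \<in> K" by (auto simp: p1_def)
              then show "y \<in> G" using fineD[OF fine \<open>(x,K) \<in> p\<close>] r(2)[OF \<open>x \<in> N\<close>] by auto
            qed
            have "snd i \<in> sets lebesgue" if i1: "i \<in> p1" for i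
            proof -
              obtain u v where "snd i = {u..v}" using ivl' p1p(1)[OF i1] by blast
              then show ?thesis by simp
            qed
            then show "\<Union>(snd ` p1) \<in> sets lebesgue"
              using fin1 by (intro sets.finite_Union) auto
          qed
          finally show "(\<Sum>i\<in>p1. Sup (snd i) - Inf (snd i)) < \<delta>" using mG by linarith
        qed
        finally show ?thesis .
      qed
      have P2: "\<bar>sum F p2\<bar> \<le> e/2"
      proof -
        have "\<bar>sum F p2\<bar> \<le> (\<Sum>(x,K)\<in>p2. c * measure lborel K)"
        proof (rule order_trans[OF sum_abs], rule sum_mono, clarify)
          fix x K assume xK: "(x,K) \<in> p2"
          then have xp: "(x,K) \<in> p" and xN: "x \<notin> N" by (auto simp: p2_def)
          obtain u v where uv: "K = {u..v}" "a \<le> u" "u \<le> v" "v \<le> b" "u \<le> x" "x \<le> v" using ivl[OF xp] by blast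
          have xab: "x \<in> {a<..<b}" using xN uv unfolding N_def by auto
          have sub: "K \<subseteq> ball x (r x)" using fineD[OF fine xp] .
          have "u \<in> K" "v \<in> K" using uv by auto
          then have "u \<in> ball x (r x)" "v \<in> ball x (r x)" using sub by blast+
          then have du: "\<bar>u - x\<bar> < r x" and dv: "\<bar>v - x\<bar> < r x" by (auto simp: dist_real_def)
          have A: "\<bar>h u - h x - (u - x) * g x\<bar> \<le> c * \<bar>u - x\<bar>" by (rule r(3)[OF xN xab du])
          have B: "\<bar>h v - h x - (v - x) * g x\<bar> \<le> c * \<bar>v - x\<bar>" by (rule r(3)[OF xN xab dv])
          have "\<bar>(v - u) * g x - (h v - h u)\<bar> \<le> c * \<bar>u - x\<bar> + c * \<bar>v - x\<bar>"
            using A B by (smt (verit, best) left_diff_distrib)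
          also have "\<dots> = c * (v - u)" using uv by (simp add: algebra_simps)
          finally show "\<bar>F (x,K)\<bar> \<le> c * measure lborel K"
            using uv xN by (simp add: F_def g'_def)
        qed
        also have "\<dots> \<le> (\<Sum>(x,K)\<in>p. c * measure lborel K)"
          by (rule sum_mono2[OF pd(1)]) (auto simp: p2_def c less_imp_le)
        also have "\<dots> = c * (b - a)"
          using additive_content_tagged_division[of p a b] p ab
          by (simp add: sum_distrib_left[symmetric] split_def)
        also have "\<dots> = e/2" using ab unfolding c_def by (simp add: field_simps)
        finally show ?thesis .
      qed
      have "norm ((\<Sum>(x,k)\<in>p. measure lborel k *\<^sub>R g' x) - (h b - h a)) = \<bar>sum F p\<bar>"
        unfolding sum_eq F_def by simp
      also have "\<dots> < e" unfolding split using P1 P2 by linarith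
      finally show "norm ((\<Sum>(x,k)\<in>p. measure lborel k *\<^sub>R g' x) - (h b - h a)) < e" .
    qed
  qed
  then show ?thesis
    by (rule has_integral_spike[OF negN, rotated]) (simp add: g'_def)
qed


lemma ftc_ac':
  fixes h g :: "real \<Rightarrow> real"
  assumes ab: "a \<le> b" and ac: "abs_cont_on a b h"
    and der: "AE x in lborel. x \<in> {a<..<b} \<longrightarrow> (h has_real_derivative g x) (at x)"
  shows "(g has_integral (h b - h a)) {a..b}"
proof (cases "a = b")
  case True
  then show ?thesis by (simp add: has_integral_refl)
next
  case False
  then show ?thesis using ftc_ac[OF _ ac der] ab by simp
qed

lemma abs_cont_imp_cont:
  assumes ac: "abs_cont_on a b h"
  shows "continuous_on {a..b} h"
  unfolding continuous_on_iff
proof (intro ballI allI impI)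
  fix x e :: real assume x: "x \<in> {a..b}" and e: "e > 0"
  obtain d where d: "d > 0" and P: "ACP a b h e d"
    using ac e unfolding abs_cont_on_alt by blast
  show "\<exists>d>0. \<forall>x'\<in>{a..b}. dist x' x < d \<longrightarrow> dist (h x') (h x) < e"
  proof (intro exI conjI ballI impI)
    show "d > 0" by (fact d)
    fix y assume y: "y \<in> {a..b}" and dy: "dist y x < d"
    define u where "u = (\<lambda>i::nat. min x y)"
    define v where "v = (\<lambda>i::nat. max x y)"
    have "(\<Sum>i<1. \<bar>h (v i) - h (u i)\<bar>) < e"
      using P unfolding ACP_def
    proof (elim allE impE)
      show "(\<forall>i<1. a \<le> u i \<and> u i \<le> v i \<and> v i \<le> b) \<and>
        (\<forall>i<1. \<forall>j<1. i \<noteq> j \<longrightarrow> {u i<..<v i} \<inter> {u j<..<v j} = {}) \<and> (\<Sum>i<1. v i - u i) < d"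
        using x y dy by (auto simp: u_def v_def dist_real_def)
    qed
    then show "dist (h y) (h x) < e"
      by (cases "x \<le> y") (auto simp: u_def v_def dist_real_def max_def min_def abs_minus_commute)
  qed
qed

lemma half_cancel: "(x::real) \<noteq> 0 \<Longrightarrow> x * (e / (2 * x)) = e / 2"
  by (simp add: field_simps)

lemma abs_cont_mult:
  fixes f \<phi> :: "real \<Rightarrow> real"
  assumes ac: "abs_cont_on a b f"
    and B: "\<And>x. x \<in> {a..b} \<Longrightarrow> \<bar>f x\<bar> \<le> B"
    and M: "\<And>x. x \<in> {a..b} \<Longrightarrow> \<bar>\<phi> x\<bar> \<le> M"
    and L: "\<And>x y. x \<in> {a..b} \<Longrightarrow> y \<in> {a..b} \<Longrightarrow> \<bar>\<phi> x - \<phi> y\<bar> \<le> L * \<bar>x - y\<bar>"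
    and pos: "B \<ge> 0" "M \<ge> 0" "L \<ge> 0"
  shows "abs_cont_on a b (\<lambda>x. \<phi> x * f x)"
  unfolding abs_cont_on_alt
proof (intro allI impI)
  fix e :: real assume e: "e > 0"
  have e1: "e / (2 * (M + 1)) > 0" using e pos by simp
  obtain d1 where d1: "d1 > 0" and P: "ACP a b f (e / (2 * (M + 1))) d1"
    using ac e1 unfolding abs_cont_on_alt by blast
  define d where "d = min d1 (e / (2 * (L * B + 1)))"
  have LB: "L * B \<ge> 0" using pos by simp
  have LB1: "L * B + 1 \<noteq> 0" using LB by linarith
  have M1: "M + 1 \<noteq> 0" using pos by linarith
  have d: "d > 0" using d1 e LB by (simp add: d_def)
  show "\<exists>d>0. ACP a b (\<lambda>x. \<phi> x * f x) e d"
  proof (intro exI conjI)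
    show "d > 0" by (fact d)
    show "ACP a b (\<lambda>x. \<phi> x * f x) e d"
      unfolding ACP_def
    proof (intro allI impI)
      fix n :: nat and u v :: "nat \<Rightarrow> real"
      assume H: "(\<forall>i<n. a \<le> u i \<and> u i \<le> v i \<and> v i \<le> b) \<and>
        (\<forall>i<n. \<forall>j<n. i \<noteq> j \<longrightarrow> {u i<..<v i} \<inter> {u j<..<v j} = {}) \<and> (\<Sum>i<n. v i - u i) < d"
      have Pd: "\<forall>(n::nat) (u::nat \<Rightarrow> real) (v::nat \<Rightarrow> real). (\<forall>i<n. a \<le> u i \<and> u i \<le> v i \<and> v i \<le> b) \<and>
        (\<forall>i<n. \<forall>j<n. i \<noteq> j \<longrightarrow> {u i<..<v i} \<inter> {u j<..<v j} = {}) \<and>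
        (\<Sum>i<n. v i - u i) < d1
        \<longrightarrow> (\<Sum>i<n. \<bar>f (v i) - f (u i)\<bar>) < e / (2 * (M + 1))" using P unfolding ACP_def .
      have "(\<Sum>i<n. v i - u i) < d1" using H d_def by simp
      then have S1: "(\<Sum>i<n. \<bar>f (v i) - f (u i)\<bar>) < e / (2 * (M + 1))"
        using Pd[rule_format, of n u v] H by blast
      have S2: "(\<Sum>i<n. v i - u i) < e / (2 * (L * B + 1))"
        using H d_def by simp
      have "(\<Sum>i<n. \<bar>\<phi> (v i) * f (v i) - \<phi> (u i) * f (u i)\<bar>)
          \<le> (\<Sum>i<n. M * \<bar>f (v i) - f (u i)\<bar> + (L * B) * (v i - u i))"
      proof (rule sum_mono)
        fix i assume "i \<in> {..<n}"
        then have iv: "u i \<in> {a..b}" "v i \<in> {a..b}" "u i \<le> v i" using H by auto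
        have "\<phi> (v i) * f (v i) - \<phi> (u i) * f (u i) = \<phi> (v i) * (f (v i) - f (u i)) + (\<phi> (v i) - \<phi> (u i)) * f (u i)"
          by (simp add: algebra_simps)
        also have "\<bar>\<dots>\<bar> \<le> \<bar>\<phi> (v i)\<bar> * \<bar>f (v i) - f (u i)\<bar> + \<bar>\<phi> (v i) - \<phi> (u i)\<bar> * \<bar>f (u i)\<bar>"
          by (metis abs_mult abs_triangle_ineq)
        also have "\<dots> \<le> M * \<bar>f (v i) - f (u i)\<bar> + (L * \<bar>v i - u i\<bar>) * B"
        proof (rule add_mono)
          show "\<bar>\<phi> (v i)\<bar> * \<bar>f (v i) - f (u i)\<bar> \<le> M * \<bar>f (v i) - f (u i)\<bar>"
            using M[OF iv(2)] by (rule mult_right_mono) simp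
          have l: "\<bar>\<phi> (v i) - \<phi> (u i)\<bar> \<le> L * \<bar>v i - u i\<bar>" using L[OF iv(2) iv(1)] .
          have b: "\<bar>f (u i)\<bar> \<le> B" using B[OF iv(1)] .
          show "\<bar>\<phi> (v i) - \<phi> (u i)\<bar> * \<bar>f (u i)\<bar> \<le> (L * \<bar>v i - u i\<bar>) * B"
            using l b pos by (intro mult_mono) auto
        qed
        finally show "\<bar>\<phi> (v i) * f (v i) - \<phi> (u i) * f (u i)\<bar> \<le> M * \<bar>f (v i) - f (u i)\<bar> + (L * B) * (v i - u i)"
          using iv by (simp add: algebra_simps)
      qed
      also have "\<dots> = M * (\<Sum>i<n. \<bar>f (v i) - f (u i)\<bar>) + (L * B) * (\<Sum>i<n. v i - u i)"
        by (simp add: sum.distrib sum_distrib_left)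
      also have "\<dots> < e"
      proof -
        have "M * (\<Sum>i<n. \<bar>f (v i) - f (u i)\<bar>) \<le> (M + 1) * (\<Sum>i<n. \<bar>f (v i) - f (u i)\<bar>)"
          by (intro mult_right_mono) (auto intro: sum_nonneg)
        also have "\<dots> \<le> (M + 1) * (e / (2 * (M + 1)))"
          using S1 pos by (intro mult_left_mono) auto
        also have "\<dots> = e / 2" by (rule half_cancel[OF M1])
        finally have A: "M * (\<Sum>i<n. \<bar>f (v i) - f (u i)\<bar>) \<le> e / 2" .
        have nn: "(\<Sum>i<n. v i - u i) \<ge> 0" using H by (intro sum_nonneg) auto
        have "(L * B) * (\<Sum>i<n. v i - u i) \<le> (L * B + 1) * (\<Sum>i<n. v i - u i)"
          using nn by (intro mult_right_mono) auto
        also have "\<dots> < (L * B + 1) * (e / (2 * (L * B + 1)))"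
          using S2 LB by (intro mult_strict_left_mono) auto
        also have "\<dots> = e / 2" by (rule half_cancel[OF LB1])
        finally have B': "(L * B) * (\<Sum>i<n. v i - u i) < e / 2" .
        show ?thesis using A B' by linarith
      qed
      finally show "(\<Sum>i<n. \<bar>\<phi> (v i) * f (v i) - \<phi> (u i) * f (u i)\<bar>) < e" .
    qed
  qed
qed

lemma cont_bound:
  fixes g :: "real \<Rightarrow> real"
  assumes "continuous_on {a..b} g"
  obtains M where "M \<ge> 0" "\<And>x. x \<in> {a..b} \<Longrightarrow> \<bar>g x\<bar> \<le> M"
proof -
  have "bounded (g ` {a..b})" using compact_continuous_image[OF assms compact_Icc] compact_imp_bounded by blast
  then obtain M where "\<forall>y\<in>g ` {a..b}. norm y \<le> M" unfolding bounded_iff by blast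
  then have "\<bar>g x\<bar> \<le> max M 0" if "x \<in> {a..b}" for x
  proof -
    have "g x \<in> g ` {a..b}" using that by (rule imageI)
    then have "norm (g x) \<le> M" using \<open>\<forall>y\<in>g ` {a..b}. norm y \<le> M\<close> by blast
    then show ?thesis by simp
  qed
  then show ?thesis by (intro that[of "max M 0"]) auto
qed

lemma si_mult_cont:
  fixes f c :: "real \<Rightarrow> real"
  assumes f: "set_integrable lborel {a..b} f" and c: "continuous_on {a..b} c"
  shows "set_integrable lborel {a..b} (\<lambda>x. c x * f x)"
proof -
  obtain M where M: "M \<ge> 0" "\<And>x. x \<in> {a..b} \<Longrightarrow> \<bar>c x\<bar> \<le> M" using cont_bound[OF c] by blast
  have m1: "(\<lambda>x. indicator {a..b} x *\<^sub>R c x) \<in> borel_measurable lborel"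
    using set_measurable_continuous_on[OF _ c] unfolding set_borel_measurable_def by simp
  have m2: "(\<lambda>x. indicator {a..b} x *\<^sub>R f x) \<in> borel_measurable lborel"
    using f unfolding set_integrable_def by (rule borel_measurable_integrable)
  have "(\<lambda>x. (indicator {a..b} x *\<^sub>R c x) * (indicator {a..b} x *\<^sub>R f x)) \<in> borel_measurable lborel"
    using m1 m2 by (rule borel_measurable_times)
  moreover have "(\<lambda>x. (indicator {a..b} x *\<^sub>R c x) * (indicator {a..b} x *\<^sub>R f x)) = (\<lambda>x. indicator {a..b} x *\<^sub>R (c x * f x))"
    by (auto simp: indicator_def)
  ultimately have m: "set_borel_measurable lborel {a..b} (\<lambda>x. c x * f x)"
    unfolding set_borel_measurable_def by simp
  show ?thesis
  proof (rule set_integrable_bound[OF _ m])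
    show "set_integrable lborel {a..b} (\<lambda>x. M * f x)" using f by simp
    show "AE x in lborel. x \<in> {a..b} \<longrightarrow> norm (c x * f x) \<le> norm (M * f x)"
    proof (rule AE_I2, rule impI)
      fix x assume "x \<in> {a..b}"
      then have "\<bar>c x\<bar> * \<bar>f x\<bar> \<le> M * \<bar>f x\<bar>" using M(2) by (intro mult_right_mono) auto
      then show "norm (c x * f x) \<le> norm (M * f x)" using M(1) by (simp add: abs_mult)
    qed
  qed
qed

lemma lint_reflect:
  fixes g :: "real \<Rightarrow> real"
  shows "(LINT z:{0..t}|lborel. g (t - z)) = (LINT s:{0..t}|lborel. g s)"
  unfolding set_lebesgue_integral_def
  by (subst lborel_integral_real_affine[where c="-1" and t=t, of "\<lambda>s. indicator {0..t} s *\<^sub>R g s"])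
     (auto intro!: Bochner_Integration.integral_cong split: split_indicator)

lemma si_reflect:
  fixes g :: "real \<Rightarrow> real"
  shows "set_integrable lborel {0..t} (\<lambda>z. g (t - z)) \<longleftrightarrow> set_integrable lborel {0..t} g"
  unfolding set_integrable_def
  using lborel_integrable_real_affine_iff[where c="-1" and t=t, of "\<lambda>s. indicator {0..t} s *\<^sub>R g s"]
  by (simp add: indicator_def conj_commute)


lemma key_identity:
  fixes \<alpha> T :: real and N :: nat and \<beta> \<tau> :: "nat \<Rightarrow> real"
    and f1 f2 :: "real \<Rightarrow> real" and t :: real
  assumes a1: "0 < \<alpha>" "\<alpha> < 1"
    and tau: "\<forall>k\<in>{1..N}. \<tau> k \<noteq> 0"
    and acT: "abs_cont_on 0 t f1"
    and derT: "AE x in lborel. x \<in> {0<..<t} \<longrightarrow> (f1 has_real_derivative f2 x) (at x)"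
    and f2t: "set_integrable lborel {0..t} f2"
    and t0: "0 \<le> t"
    and ect: "continuous_on {0..t} (\<lambda>s. prony_err \<alpha> N \<beta> \<tau> (t - s))"
  shows "caputo \<alpha> f1 f2 t - prony N \<beta> \<tau> f1 t =
            prony_err \<alpha> N \<beta> \<tau> t * f1 0
            + (LINT z:{0..t}|lborel. prony_err \<alpha> N \<beta> \<tau> z * f2 (t - z))"
proof -
  let ?e = "prony_err \<alpha> N \<beta> \<tau>"
  have f1ct: "continuous_on {0..t} f1" by (rule abs_cont_imp_cont[OF acT])
  have powc: "continuous_on {0..t} (\<lambda>s. (t - s) powr (1 - \<alpha>))"
    using a1 by (intro continuous_on_powr') (auto intro!: continuous_intros)
  have hJ: "(f2 has_integral (f1 t - f1 0)) {0..t}" by (rule ftc_ac'[OF t0 acT derT])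
  define E where "E k = integral {0..t} (\<lambda>s. exp ((s - t) / \<tau> k) * f1 s)" for k
  have hP: "((\<lambda>s. exp ((s - t) / \<tau> k) * f2 s) has_integral (f1 t - exp (- t / \<tau> k) * f1 0 - E k / \<tau> k)) {0..t}"
    if k: "k \<in> {1..N}" for k
  proof -
    have tk: "\<tau> k \<noteq> 0" using tau k by blast
    define \<phi> where "\<phi> s = exp ((s - t) / \<tau> k)" for s
    have d\<phi>: "(\<phi> has_real_derivative \<phi> s / \<tau> k) (at s)" for s
      unfolding \<phi>_def using tk by (auto intro!: derivative_eq_intros simp: field_simps)
    have \<phi>c: "continuous_on {0..t} \<phi>" unfolding \<phi>_def using tk by (intro continuous_intros) auto
    have \<phi>'c: "continuous_on {0..t} (\<lambda>s. \<phi> s / \<tau> k)" using \<phi>c tk by (intro continuous_intros) auto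
    obtain B where B: "B \<ge> 0" "\<And>x. x \<in> {0..t} \<Longrightarrow> \<bar>f1 x\<bar> \<le> B" using cont_bound[OF f1ct] by blast
    obtain M where M: "M \<ge> 0" "\<And>x. x \<in> {0..t} \<Longrightarrow> \<bar>\<phi> x\<bar> \<le> M" using cont_bound[OF \<phi>c] by blast
    obtain L where L: "L \<ge> 0" "\<And>x. x \<in> {0..t} \<Longrightarrow> \<bar>\<phi> x / \<tau> k\<bar> \<le> L" using cont_bound[OF \<phi>'c] by blast
    have Lip: "\<bar>\<phi> x - \<phi> y\<bar> \<le> L * \<bar>x - y\<bar>" if "x \<in> {0..t}" "y \<in> {0..t}" for x y
    proof -
      have "norm (\<phi> x - \<phi> y) \<le> L * norm (x - y)"
      proof (rule field_differentiable_bound[OF convex_real_interval(5)])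
        show "(\<phi> has_field_derivative \<phi> z / \<tau> k) (at z within {0..t})" for z
          using d\<phi>[of z] by (rule has_field_derivative_at_within)
        show "norm (\<phi> z / \<tau> k) \<le> L" if "z \<in> {0..t}" for z using L(2)[OF that] by simp
      qed (use that in auto)
      then show ?thesis by simp
    qed
    have acp: "abs_cont_on 0 t (\<lambda>s. \<phi> s * f1 s)"
      by (rule abs_cont_mult[OF acT B(2) M(2) Lip B(1) M(1) L(1)])
    have derp: "AE x in lborel. x \<in> {0<..<t} \<longrightarrow>
        ((\<lambda>s. \<phi> s * f1 s) has_real_derivative (\<phi> x * f1 x / \<tau> k + \<phi> x * f2 x)) (at x)"
      using derT
    proof eventually_elim
      case (elim x)
      show ?case
      proof
        assume "x \<in> {0<..<t}"
        then have d1: "(f1 has_real_derivative f2 x) (at x)" using elim by blast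
        show "((\<lambda>s. \<phi> s * f1 s) has_real_derivative (\<phi> x * f1 x / \<tau> k + \<phi> x * f2 x)) (at x)"
          by (rule DERIV_cong[OF DERIV_mult'[OF d\<phi> d1]]) (simp add: algebra_simps)
      qed
    qed
    have H: "((\<lambda>s. \<phi> s * f1 s / \<tau> k + \<phi> s * f2 s) has_integral (\<phi> t * f1 t - \<phi> 0 * f1 0)) {0..t}"
      by (rule ftc_ac'[OF t0 acp derp])
    have "(\<lambda>s. \<phi> s * f1 s) integrable_on {0..t}"
      using \<phi>c f1ct by (intro integrable_continuous_interval continuous_intros)
    then have "((\<lambda>s. \<phi> s * f1 s) has_integral E k) {0..t}"
      unfolding E_def \<phi>_def by (rule integrable_integral)
    then have I1: "((\<lambda>s. \<phi> s * f1 s / \<tau> k) has_integral E k / \<tau> k) {0..t}"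
      by (rule has_integral_divide)
    have "((\<lambda>s. (\<phi> s * f1 s / \<tau> k + \<phi> s * f2 s) - \<phi> s * f1 s / \<tau> k) has_integral
           (\<phi> t * f1 t - \<phi> 0 * f1 0) - E k / \<tau> k) {0..t}"
      by (rule has_integral_diff[OF H I1])
    then show ?thesis by (simp add: \<phi>_def)
  qed
  have sA: "set_integrable lborel {0..t} (\<lambda>s. (t - s) powr (1 - \<alpha>) * f2 s)"
    by (rule si_mult_cont[OF f2t powc])
  define A where "A = (LINT s:{0..t}|lborel. (t - s) powr (1 - \<alpha>) * f2 s)"
  have hA: "((\<lambda>s. (t - s) powr (1 - \<alpha>) * f2 s) has_integral A) {0..t}"
    using integrable_integral[OF set_borel_integral_eq_integral(1)[OF sA]] set_borel_integral_eq_integral(2)[OF sA]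
    by (simp add: A_def)
  have hE: "(LINT s:{0..t}|lborel. \<beta> k * exp ((s - t) / \<tau> k) * f1 s) = \<beta> k * E k" if k: "k \<in> {1..N}" for k
  proof -
    have tk: "\<tau> k \<noteq> 0" using tau k by blast
    have cont: "continuous_on {0..t} (\<lambda>s. \<beta> k * exp ((s - t) / \<tau> k) * f1 s)"
      using f1ct tk by (intro continuous_intros) auto
    have "(LINT s:{0..t}|lborel. \<beta> k * exp ((s - t) / \<tau> k) * f1 s) = integral {0..t} (\<lambda>s. \<beta> k * exp ((s - t) / \<tau> k) * f1 s)"
      by (rule set_borel_integral_eq_integral(2)[OF borel_integrable_atLeastAtMost'[OF cont]])
    also have "\<dots> = \<beta> k * E k" by (simp add: E_def mult.assoc)
    finally show ?thesis .
  qed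
  have reflect: "(LINT z:{0..t}|lborel. ?e z * f2 (t - z)) = (LINT s:{0..t}|lborel. ?e (t - s) * f2 s)"
    using lint_reflect[where g="\<lambda>s. ?e (t - s) * f2 s" and t=t] by simp
  have s3: "set_integrable lborel {0..t} (\<lambda>s. ?e (t - s) * f2 s)" by (rule si_mult_cont[OF f2t ect])
  have I3eq: "(LINT s:{0..t}|lborel. ?e (t - s) * f2 s) = integral {0..t} (\<lambda>s. ?e (t - s) * f2 s)"
    by (rule set_borel_integral_eq_integral(2)[OF s3])
  have expand: "?e (t - s) * f2 s = (1 / Gamma (2 - \<alpha>)) * ((t - s) powr (1 - \<alpha>) * f2 s) - \<beta> 0 * f2 s
      + (\<Sum>k\<in>{1..N}. \<beta> k * \<tau> k * (exp ((s - t) / \<tau> k) * f2 s) - \<beta> k * \<tau> k * f2 s)" for s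
  proof -
    have e1: "?e (t - s) = (t - s) powr (1 - \<alpha>) / Gamma (2 - \<alpha>) - \<beta> 0 + (\<Sum>k\<in>{1..N}. \<beta> k * \<tau> k * (exp (- (t - s) / \<tau> k) - 1))"
      by (simp only: prony_err_def)
    have e2: "(\<Sum>k\<in>{1..N}. \<beta> k * \<tau> k * (exp (- (t - s) / \<tau> k) - 1)) * f2 s = (\<Sum>k\<in>{1..N}. \<beta> k * \<tau> k * (exp ((s - t) / \<tau> k) * f2 s) - \<beta> k * \<tau> k * f2 s)"
      unfolding sum_distrib_right by (rule sum.cong[OF refl]) (simp add: algebra_simps)
    show ?thesis by (simp only: e1 e2[symmetric]) (simp add: algebra_simps)
  qed
  define R where "R = (1 / Gamma (2 - \<alpha>)) * A - \<beta> 0 * (f1 t - f1 0)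
      + (\<Sum>k\<in>{1..N}. \<beta> k * \<tau> k * (f1 t - exp (- t / \<tau> k) * f1 0 - E k / \<tau> k) - \<beta> k * \<tau> k * (f1 t - f1 0))"
  have hI3: "((\<lambda>s. ?e (t - s) * f2 s) has_integral R) {0..t}"
    unfolding expand R_def
    by (intro has_integral_add has_integral_diff has_integral_sum has_integral_mult_right hA hJ hP) auto
  have I3: "(LINT z:{0..t}|lborel. ?e z * f2 (t - z)) = R"
    using reflect I3eq integral_unique[OF hI3] by simp
  have per_k: "\<beta> k * \<tau> k * (f1 t - exp (- t / \<tau> k) * f1 0 - E k / \<tau> k) - \<beta> k * \<tau> k * (f1 t - f1 0)
      + \<beta> k * \<tau> k * (exp (- t / \<tau> k) - 1) * f1 0 = - (\<beta> k * E k)" if k: "k \<in> {1..N}" for k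
  proof -
    have tk: "\<tau> k \<noteq> 0" using tau k by blast
    then show ?thesis by (simp add: field_simps)
  qed
  have sumk: "(\<Sum>k\<in>{1..N}. \<beta> k * \<tau> k * (f1 t - exp (- t / \<tau> k) * f1 0 - E k / \<tau> k) - \<beta> k * \<tau> k * (f1 t - f1 0))
      + (\<Sum>k\<in>{1..N}. \<beta> k * \<tau> k * (exp (- t / \<tau> k) - 1)) * f1 0 = - (\<Sum>k\<in>{1..N}. \<beta> k * E k)"
  proof -
    have "(\<Sum>k\<in>{1..N}. \<beta> k * \<tau> k * (f1 t - exp (- t / \<tau> k) * f1 0 - E k / \<tau> k) - \<beta> k * \<tau> k * (f1 t - f1 0))
      + (\<Sum>k\<in>{1..N}. \<beta> k * \<tau> k * (exp (- t / \<tau> k) - 1)) * f1 0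
      = (\<Sum>k\<in>{1..N}. \<beta> k * \<tau> k * (f1 t - exp (- t / \<tau> k) * f1 0 - E k / \<tau> k) - \<beta> k * \<tau> k * (f1 t - f1 0)
      + \<beta> k * \<tau> k * (exp (- t / \<tau> k) - 1) * f1 0)"
      by (simp add: sum.distrib sum_distrib_right)
    also have "\<dots> = (\<Sum>k\<in>{1..N}. - (\<beta> k * E k))" by (rule sum.cong[OF refl]) (rule per_k)
    also have "\<dots> = - (\<Sum>k\<in>{1..N}. \<beta> k * E k)" by (simp add: sum_negf)
    finally show ?thesis .
  qed
  have pr: "prony N \<beta> \<tau> f1 t = \<beta> 0 * f1 t + (\<Sum>k\<in>{1..N}. \<beta> k * E k)"
    unfolding prony_def using hE by simp
  have ca: "caputo \<alpha> f1 f2 t = (t powr (1 - \<alpha>) * f1 0 + A) / Gamma (2 - \<alpha>)"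
    unfolding caputo_def A_def ..
  have et: "?e t = t powr (1 - \<alpha>) / Gamma (2 - \<alpha>) - \<beta> 0 + (\<Sum>k\<in>{1..N}. \<beta> k * \<tau> k * (exp (- t / \<tau> k) - 1))"
    unfolding prony_err_def by simp
  show ?thesis
    unfolding I3 pr ca et R_def using sumk by (simp add: algebra_simps add_divide_distrib)
qed


theorem lemma1:
  fixes \<alpha> T :: real and N :: nat and \<beta> \<tau> :: "nat \<Rightarrow> real"
    and f f1 f2 :: "real \<Rightarrow> real"
  assumes "0 < \<alpha>" "\<alpha> < 1" "0 < T" "1 \<le> N"
    and "\<forall>k\<in>{1..N}. \<tau> k \<noteq> 0"
    and "\<forall>t\<in>{0..T}. (f has_real_derivative f1 t) (at t within {0..T})"
    and "abs_cont_on 0 T f1"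
    and "AE t in lborel. t \<in> {0<..<T} \<longrightarrow> (f1 has_real_derivative f2 t) (at t)"
    and "set_integrable lborel {0..T} f2"
  shows "(\<forall>t\<in>{0..T}. caputo \<alpha> f1 f2 t - prony N \<beta> \<tau> f1 t =
            prony_err \<alpha> N \<beta> \<tau> t * f1 0
            + (LINT z:{0..t}|lborel. prony_err \<alpha> N \<beta> \<tau> z * f2 (t - z)))
       \<and> (\<forall>t\<in>{0..T}. \<bar>caputo \<alpha> f1 f2 t - prony N \<beta> \<tau> f1 t\<bar> \<le>
            (SUP z\<in>{0..T}. \<bar>prony_err \<alpha> N \<beta> \<tau> z\<bar>)
            * (\<bar>f1 0\<bar> + (LINT s:{0..T}|lborel. \<bar>f2 s\<bar>)))"
proof -
  let ?e = "prony_err \<alpha> N \<beta> \<tau>"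
  have a1: "0 < \<alpha>" "\<alpha> < 1" using assms(1,2) .
  have tau: "\<forall>k\<in>{1..N}. \<tau> k \<noteq> 0" using assms(5) .
  have ac: "abs_cont_on 0 T f1" using assms(7) .
  have der: "AE t in lborel. t \<in> {0<..<T} \<longrightarrow> (f1 has_real_derivative f2 t) (at t)" using assms(8) .
  have f2T: "set_integrable lborel {0..T} f2" using assms(9) .
  have G: "Gamma (2 - \<alpha>) \<noteq> 0" using a1 by (simp add: Gamma_real_pos less_imp_neq[symmetric])
  have powc: "continuous_on {0..T} (\<lambda>z. z powr (1 - \<alpha>))"
    using a1 by (intro continuous_on_powr') (auto intro!: continuous_intros)
  have ec: "continuous_on {0..T} ?e"
  proof -
    have c1: "continuous_on {0..T} (\<lambda>z. z powr (1 - \<alpha>) / Gamma (2 - \<alpha>))"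
      using G by (intro continuous_on_divide[OF powc continuous_on_const]) auto
    have c2: "continuous_on {0..T} (\<lambda>z. \<Sum>k\<in>{1..N}. \<beta> k * \<tau> k * (exp (- z / \<tau> k) - 1))"
      using tau by (intro continuous_intros) auto
    show ?thesis unfolding prony_err_def by (intro continuous_on_add continuous_on_diff c1 c2 continuous_on_const)
  qed
  have ect: "continuous_on {0..t} (\<lambda>s. ?e (t - s))" if t: "t \<in> {0..T}" for t
    by (rule continuous_on_compose2[OF ec]) (use t in \<open>auto intro!: continuous_intros\<close>)
  have f2t: "set_integrable lborel {0..t} f2" if t: "t \<in> {0..T}" for t
    by (rule set_integrable_subset[OF f2T]) (use t in auto)
  have key: "caputo \<alpha> f1 f2 t - prony N \<beta> \<tau> f1 t =
            ?e t * f1 0 + (LINT z:{0..t}|lborel. ?e z * f2 (t - z))" if t: "t \<in> {0..T}" for t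
  proof (rule key_identity[OF a1 tau _ _ f2t[OF t] _ ect[OF t]])
    show "abs_cont_on 0 t f1" by (rule abs_cont_on_sub[OF ac]) (use t in auto)
    show "AE x in lborel. x \<in> {0<..<t} \<longrightarrow> (f1 has_real_derivative f2 x) (at x)"
      using der by eventually_elim (use t in auto)
    show "0 \<le> t" using t by auto
  qed
  obtain Me where Me: "Me \<ge> 0" "\<And>z. z \<in> {0..T} \<Longrightarrow> \<bar>?e z\<bar> \<le> Me" using cont_bound[OF ec] by blast
  define S where "S = (SUP z\<in>{0..T}. \<bar>?e z\<bar>)"
  have bdd: "bdd_above ((\<lambda>z. \<bar>?e z\<bar>) ` {0..T})" using Me(2) by (intro bdd_aboveI2) auto
  have eS: "\<bar>?e z\<bar> \<le> S" if "z \<in> {0..T}" for z unfolding S_def by (rule cSUP_upper[OF that bdd])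
  have S0: "S \<ge> 0" using eS[of 0] assms(3) by auto
  have f2abs: "set_integrable lborel {0..T} (\<lambda>s. \<bar>f2 s\<bar>)" by (rule set_integrable_abs[OF f2T])
  have bound: "\<bar>caputo \<alpha> f1 f2 t - prony N \<beta> \<tau> f1 t\<bar> \<le> S * (\<bar>f1 0\<bar> + (LINT s:{0..T}|lborel. \<bar>f2 s\<bar>))"
    if t: "t \<in> {0..T}" for t
  proof -
    have s3: "set_integrable lborel {0..t} (\<lambda>s. ?e (t - s) * f2 s)" by (rule si_mult_cont[OF f2t[OF t] ect[OF t]])
    have conv: "(LINT z:{0..t}|lborel. ?e z * f2 (t - z)) = integral {0..t} (\<lambda>s. ?e (t - s) * f2 s)"
      using lint_reflect[where g="\<lambda>s. ?e (t - s) * f2 s" and t=t] set_borel_integral_eq_integral(2)[OF s3] by simp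
    have f2ta: "set_integrable lborel {0..t} (\<lambda>s. \<bar>f2 s\<bar>)" by (rule set_integrable_abs[OF f2t[OF t]])
    have i1: "(\<lambda>s. ?e (t - s) * f2 s) integrable_on {0..t}" by (rule set_borel_integral_eq_integral(1)[OF s3])
    have i2: "(\<lambda>s. \<bar>f2 s\<bar>) integrable_on {0..t}" by (rule set_borel_integral_eq_integral(1)[OF f2ta])
    have i3: "(\<lambda>s. \<bar>f2 s\<bar>) integrable_on {0..T}" by (rule set_borel_integral_eq_integral(1)[OF f2abs])
    have "\<bar>integral {0..t} (\<lambda>s. ?e (t - s) * f2 s)\<bar> \<le> integral {0..t} (\<lambda>s. S * \<bar>f2 s\<bar>)"
    proof -
      have "norm (integral {0..t} (\<lambda>s. ?e (t - s) * f2 s)) \<le> integral {0..t} (\<lambda>s. S * \<bar>f2 s\<bar>)"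
      proof (rule integral_norm_bound_integral[OF i1])
        show "(\<lambda>s. S * \<bar>f2 s\<bar>) integrable_on {0..t}" using i2 by (rule integrable_on_mult_right)
        fix s assume s: "s \<in> {0..t}"
        then have "t - s \<in> {0..T}" using t by auto
        then have "\<bar>?e (t - s)\<bar> \<le> S" by (rule eS)
        then show "norm (?e (t - s) * f2 s) \<le> S * \<bar>f2 s\<bar>" by (simp add: abs_mult mult_right_mono)
      qed
      then show ?thesis by simp
    qed
    also have "\<dots> = S * integral {0..t} (\<lambda>s. \<bar>f2 s\<bar>)" by simp
    also have "\<dots> \<le> S * integral {0..T} (\<lambda>s. \<bar>f2 s\<bar>)"
      using S0 integral_subset_le[of "{0..t}" "{0..T}" "\<lambda>s. \<bar>f2 s\<bar>"] t i2 i3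
      by (intro mult_left_mono) auto
    also have "\<dots> = S * (LINT s:{0..T}|lborel. \<bar>f2 s\<bar>)"
      using set_borel_integral_eq_integral(2)[OF f2abs] by simp
    finally have L: "\<bar>LINT z:{0..t}|lborel. ?e z * f2 (t - z)\<bar> \<le> S * (LINT s:{0..T}|lborel. \<bar>f2 s\<bar>)"
      unfolding conv .
    have "\<bar>?e t * f1 0\<bar> \<le> S * \<bar>f1 0\<bar>" using eS[OF t] by (simp add: abs_mult mult_right_mono)
    then have "\<bar>?e t * f1 0 + (LINT z:{0..t}|lborel. ?e z * f2 (t - z))\<bar> \<le> S * \<bar>f1 0\<bar> + S * (LINT s:{0..T}|lborel. \<bar>f2 s\<bar>)"
      using L by linarith
    then show ?thesis unfolding key[OF t] by (simp add: distrib_left)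
  qed
  show ?thesis using key bound unfolding S_def by blast
qed

end
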